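(* Fix $c>0$, let $\Phi\in\Omega(n,\lfloor c2^n\rfloor)$, and let $t=t(n)$ be integers with $n-c\sqrt n\le t(n)\le n$. Let $E_t$ be the event that PUR reaches stage $t$ and for every $j$ with $t\le j\le n$, \[N_n-(n-t)\left[1+\frac{2(N_n-1)}{t}\right]\le N_j\le N_n .\] Then $\Pr[E_t\mid \text{PUR reaches stage }t]=1-o(1)$ as $n\to\infty$.
   Context: Horn clauses, $\mathcal H_n$ and $\Omega(n,m)$: $\mathcal H_n$ is the set of pairs $(P,S)$ with $P\in\{\emptyset,\{1\},\dots,\{n\}\}$, $S\subseteq\{1,\dots,n\}$, $(P,S)\ne(\emptyset,\emptyset)$, representing the Horn clause $\bigvee_{i\in P}x_i\vee\bigvee_{j\in S}\neg x_j$ (so $|\mathcal H_n|\sim n2^n$; the paper writes this number as $(n+2)2^n-1$); $\Omega(n,m)$ is the distribution of the conjunction of $m$ clauses drawn independently, uniformly with repetition from $\mathcal H_n$. Algorithm PUR on a Horn formula $\Phi$ (multiset of clauses): if $\Phi$ has no positive unit clause (single literal $x_i$), accept. Otherwise choose uniformly at random a positive unit clause $x_i$; if $\Phi$ contains the clause $\neg x_i$, reject; otherwise set $x_i=1$ (delete clauses containing $x_i$, delete $\neg x_i$ from the others) and recurse. Stages: stage $t$ is the iteration performed when exactly $t$ variables are unassigned (first iteration = stage $n$). PUR reaches stage $t$ if it neither accepted nor rejected at stages $n,\dots,t+1$. $\Phi_t$ is the formula at the beginning of stage $t$, $N_t$ its number of clauses (so $N_n=\lfloor c2^n\rfloor$).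 *)

theory Defs
  imports "HOL-Probability.Probability" "HOL-Library.Multiset"
begin

text \<open>A Horn clause is a pair (P, S): P is the set of positive literals (empty or a
singleton), S the set of negated variables. A formula is a multiset of clauses.\<close>

type_synonym clause = "nat set \<times> nat set"
type_synonym formula = "clause multiset"

definition horn_clauses :: "nat \<Rightarrow> clause set" where
  "horn_clauses n = {(P, S). (P = {} \<or> (\<exists>i\<in>{1..n}. P = {i})) \<and> S \<subseteq> {1..n}
                        \<and> (P, S) \<noteq> ({}, {})}"

definition Omega :: "nat \<Rightarrow> nat \<Rightarrow> formula pmf" where
  "Omega n m = map_pmf mset (replicate_pmf m (pmf_of_set (horn_clauses n)))"

definition pos_units :: "formula \<Rightarrow> nat set" where
  "pos_units \<Phi> = {i. ({i}, {}) \<in># \<Phi>}"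

definition assign_true :: "nat \<Rightarrow> formula \<Rightarrow> formula" where
  "assign_true i \<Phi> = image_mset (\<lambda>(P, S). (P, S - {i})) (filter_mset (\<lambda>(P, S). i \<notin> P) \<Phi>)"

text \<open>PUR started at stage k (k unassigned variables) on formula Phi. The result is the
trajectory [Phi_k, Phi_(k-1), ..., Phi_s], the formulas at the beginning of every stage
that is reached, s being the stage at which PUR accepts or rejects.\<close>
primrec PUR_traj :: "nat \<Rightarrow> formula \<Rightarrow> formula list pmf" where
  "PUR_traj 0 \<Phi> = return_pmf [\<Phi>]"
| "PUR_traj (Suc k) \<Phi> =
     (if pos_units \<Phi> = {} then return_pmf [\<Phi>]
      else bind_pmf (pmf_of_set (pos_units \<Phi>))
             (\<lambda>i. if ({}, {i}) \<in># \<Phi> then return_pmf [\<Phi>]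
                  else map_pmf ((#) \<Phi>) (PUR_traj k (assign_true i \<Phi>))))"

definition PUR_run :: "real \<Rightarrow> nat \<Rightarrow> formula list pmf" where
  "PUR_run c n = bind_pmf (Omega n (nat \<lfloor>c * 2 ^ n\<rfloor>)) (PUR_traj n)"

definition reaches :: "nat \<Rightarrow> nat \<Rightarrow> formula list \<Rightarrow> bool" where
  "reaches n t tr \<longleftrightarrow> t \<le> n \<and> n - t < length tr"

definition Nstage :: "nat \<Rightarrow> formula list \<Rightarrow> nat \<Rightarrow> real" where
  "Nstage n tr j = real (size (tr ! (n - j)))"

definition event_E :: "nat \<Rightarrow> nat \<Rightarrow> formula list \<Rightarrow> bool" where
  "event_E n t tr \<longleftrightarrow> reaches n t tr \<and>
     (\<forall>j\<in>{t..n}. Nstage n tr n - real (n - t) * (1 + 2 * (Nstage n tr n - 1) / real t)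
                     \<le> Nstage n tr j
                 \<and> Nstage n tr j \<le> Nstage n tr n)"

end

theory Submission
  imports Defs "HOL-Real_Asymp.Real_Asymp"
begin

lemma measure_bind_pmf_of_set:
  assumes "finite H" "H \<noteq> {}"
  shows "measure_pmf.prob (bind_pmf (pmf_of_set H) F) X = (\<Sum>x\<in>H. measure_pmf.prob (F x) X) / card H"
proof -
  have "measure_pmf.prob (bind_pmf (pmf_of_set H) F) X = (\<integral>x. measure_pmf.prob (F x) X \<partial>measure_pmf (pmf_of_set H))"
    unfolding measure_pmf_bind
    by (rule measure_pmf.measure_bind[where N="count_space UNIV"]) (auto intro: measurable_measure_pmf simp: measure_pmf_in_subprob_algebra)
  also have "\<dots> = (\<Sum>x\<in>H. measure_pmf.prob (F x) X) / card H"
    using assms by (simp add: integral_pmf_of_set)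
  finally show ?thesis .
qed

lemma replicate_pmf_Suc':
  "replicate_pmf (Suc N) p = bind_pmf p (\<lambda>x. map_pmf ((#) x) (replicate_pmf N p))"
  by (simp add: map_pmf_def)

lemma prob_replicate_prod:
  assumes "finite H" "H \<noteq> {}"
  shows "measure_pmf.prob (replicate_pmf N (pmf_of_set H)) {xs. \<forall>k<N. xs!k \<in> A k}
         = (\<Prod>k<N. card (H \<inter> A k) / card H)"
proof (induction N arbitrary: A)
  case 0
  then show ?case by simp
next
  case (Suc N)
  have "measure_pmf.prob (replicate_pmf (Suc N) (pmf_of_set H)) {xs. \<forall>k<Suc N. xs!k \<in> A k}
     = (\<Sum>x\<in>H. measure_pmf.prob (replicate_pmf N (pmf_of_set H)) ((#) x -` {xs. \<forall>k<Suc N. xs!k \<in> A k})) / card H"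
    unfolding replicate_pmf_Suc' using assms by (simp add: measure_bind_pmf_of_set)
  also have "\<dots> = (\<Sum>x\<in>H. if x \<in> A 0 then measure_pmf.prob (replicate_pmf N (pmf_of_set H)) {xs. \<forall>k<N. xs!k \<in> A (Suc k)} else 0) / card H"
  proof -
    have E: "(#) x -` {xs. \<forall>k<Suc N. xs!k \<in> A k} = (if x \<in> A 0 then {xs. \<forall>k<N. xs!k \<in> A (Suc k)} else {})" for x
      by (auto simp: less_Suc_eq_0_disj nth_Cons split: nat.splits)
    show ?thesis by (intro arg_cong2[where f="(/)"] sum.cong refl) (subst E, simp)
  qed
  also have "\<dots> = card (H \<inter> A 0) / card H * (\<Prod>k<N. card (H \<inter> A (Suc k)) / card H)"
    using Suc[of "\<lambda>k. A (Suc k)"] assms by (simp add: sum.If_cases[OF assms(1)])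
  also have "\<dots> = (\<Prod>k<Suc N. card (H \<inter> A k) / card H)"
    by (subst prod.lessThan_Suc_shift) simp
  finally show ?case .
qed

lemma chernoff_rep:
  assumes "finite H" "H \<noteq> {}"
  shows "measure_pmf.prob (replicate_pmf N (pmf_of_set H)) {xs. r \<le> length (filter Q xs)}
         \<le> (1 + card (H \<inter> {x. Q x}) / card H) ^ N / 2 ^ r"
proof (induction N arbitrary: r)
  case 0
  then show ?case by (cases r) auto
next
  case (Suc N)
  define q where "q = card (H \<inter> {x. Q x}) / card H"
  define F where "F r = measure_pmf.prob (replicate_pmf N (pmf_of_set H)) {xs. r \<le> length (filter Q xs)}" for r
  have IH: "F r \<le> (1+q)^N / 2^r" for r using Suc unfolding F_def q_def by blast
  have q01: "0 \<le> q" "q \<le> 1" using assms unfolding q_def by (auto simp: card_mono divide_le_eq_1)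
  show ?case
  proof (cases r)
    case 0
    have "(1::real) \<le> (1+q)^Suc N" by (rule one_le_power) (use q01 in simp)
    then show ?thesis using 0 q_def by (simp add: measure_pmf.prob_le_1 order_trans[OF measure_pmf.prob_le_1])
  next
    case (Suc r')
    have "measure_pmf.prob (replicate_pmf (Suc N) (pmf_of_set H)) {xs. r \<le> length (filter Q xs)}
       = (\<Sum>x\<in>H. measure_pmf.prob (replicate_pmf N (pmf_of_set H)) ((#) x -` {xs. r \<le> length (filter Q xs)})) / card H"
      unfolding replicate_pmf_Suc' using assms by (simp add: measure_bind_pmf_of_set)
    also have "\<dots> = (\<Sum>x\<in>H. if Q x then F r' else F r) / card H"
      by (intro arg_cong2[where f="(/)"] sum.cong) (auto simp: F_def Suc)
    also have "\<dots> = q * F r' + (1 - q) * F r"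
    proof -
      have c: "card (H \<inter> {x. Q x}) + card (H \<inter> - {x. Q x}) = card H"
        using assms(1) by (metis card_Int_Diff Diff_eq Int_commute finite_Int)
      have c': "real (card (H \<inter> Collect Q)) + real (card (H \<inter> - Collect Q)) = real (card H)"
        using c by (metis of_nat_add)
      have "(\<Sum>x\<in>H. if Q x then F r' else F r) = card (H \<inter> {x. Q x}) * F r' + card (H \<inter> - {x. Q x}) * F r"
        by (simp add: sum.If_cases[OF assms(1)])
      moreover have "real (card (H \<inter> - Collect Q)) = real (card H) - real (card (H \<inter> Collect Q))" using c' by linarith
      ultimately show ?thesis using assms unfolding q_def by (simp add: field_simps)
    qed
    also have "\<dots> \<le> q * ((1+q)^N / 2^r') + (1 - q) * ((1+q)^N / 2^r)"
      using q01 IH by (intro add_mono mult_left_mono) auto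
    also have "\<dots> = (1+q)^Suc N / 2^r"
      using Suc by (simp add: field_simps)
    finally show ?thesis unfolding q_def .
  qed
qed

definition count_pos :: "nat \<Rightarrow> formula \<Rightarrow> nat" where
  "count_pos i \<Phi> = size (filter_mset (\<lambda>c. i \<in> fst c) \<Phi>)"

definition restr :: "nat set \<Rightarrow> formula \<Rightarrow> formula" where
  "restr A \<Phi> = image_mset (\<lambda>(P, S). (P, S - A)) (filter_mset (\<lambda>(P, S). P \<inter> A = {}) \<Phi>)"

lemma size_assign_true: "size (assign_true i \<Phi>) + count_pos i \<Phi> = size \<Phi>"
  unfolding assign_true_def count_pos_def
  by (induction \<Phi>) auto

lemma count_pos_assign_true: "count_pos j (assign_true i \<Phi>) \<le> count_pos j \<Phi>"
  unfolding assign_true_def count_pos_def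
  by (induction \<Phi>) auto

lemma restr_empty: "restr {} \<Phi> = \<Phi>"
proof -
  have "filter_mset (\<lambda>(P, S). P \<inter> {} = {}) \<Phi> = filter_mset (\<lambda>x. True) \<Phi>"
    by (rule filter_mset_cong0) (simp add: case_prod_unfold)
  moreover have "image_mset (\<lambda>(P, S). (P, S - {})) \<Phi> = image_mset id \<Phi>"
    by (rule image_mset_cong) (simp add: case_prod_unfold)
  ultimately show ?thesis unfolding restr_def by simp
qed

lemma assign_true_restr: "assign_true i (restr A \<Phi>) = restr (insert i A) \<Phi>"
  unfolding assign_true_def restr_def filter_mset_image_mset filter_filter_mset multiset.map_comp
  by (intro arg_cong2[where f=image_mset] ext filter_mset_cong0) (auto simp: case_prod_unfold)

lemma finite_pos_units: "finite (pos_units \<Phi>)"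
proof -
  have "pos_units \<Phi> = (\<lambda>i. ({i}, {})) -` set_mset \<Phi>" unfolding pos_units_def by auto
  moreover have "inj (\<lambda>i::nat. ({i}, {}::nat set))" by (auto intro: injI)
  ultimately show ?thesis using finite_vimageI[of "set_mset \<Phi>" "\<lambda>i::nat. ({i}, {}::nat set)"] by simp
qed

lemma set_pmf_PUR_Suc:
  assumes "tr \<in> set_pmf (PUR_traj (Suc k) \<Phi>)"
  shows "tr = [\<Phi>] \<or> (\<exists>i\<in>pos_units \<Phi>. \<exists>tr'. tr = \<Phi> # tr' \<and> tr' \<in> set_pmf (PUR_traj k (assign_true i \<Phi>)))"
proof (cases "pos_units \<Phi> = {}")
  case True
  then show ?thesis using assms by simp
next
  case False
  define f where "f = (\<lambda>i. if ({}, {i}) \<in># \<Phi> then return_pmf [\<Phi>]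
                  else map_pmf ((#) \<Phi>) (PUR_traj k (assign_true i \<Phi>)))"
  have "PUR_traj (Suc k) \<Phi> = bind_pmf (pmf_of_set (pos_units \<Phi>)) f"
    using False by (simp add: f_def)
  then have "tr \<in> set_pmf (bind_pmf (pmf_of_set (pos_units \<Phi>)) f)" using assms by simp
  then obtain i where i: "i \<in> pos_units \<Phi>" and tri: "tr \<in> set_pmf (f i)"
    using False finite_pos_units[of \<Phi>] by (auto simp: set_bind_pmf)
  note tri = tri[unfolded f_def]
  show ?thesis
  proof (cases "({}, {i}) \<in># \<Phi>")
    case True then show ?thesis using tri by simp
  next
    case False then show ?thesis using tri i by auto
  qed
qed

lemma PUR_hd: "tr \<in> set_pmf (PUR_traj k \<Phi>) \<Longrightarrow> tr \<noteq> [] \<and> tr ! 0 = \<Phi>"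
proof (induction k arbitrary: \<Phi> tr)
  case 0 then show ?case by simp
next
  case (Suc k)
  from set_pmf_PUR_Suc[OF Suc.prems] show ?case
  proof
    assume "tr = [\<Phi>]" then show ?thesis by simp
  next
    assume "\<exists>i\<in>pos_units \<Phi>. \<exists>tr'. tr = \<Phi> # tr' \<and> tr' \<in> set_pmf (PUR_traj k (assign_true i \<Phi>))"
    then show ?thesis by force
  qed
qed

lemma PUR_size:
  assumes "tr \<in> set_pmf (PUR_traj k \<Phi>)" "\<And>i. count_pos i \<Phi> \<le> M" "j < length tr"
  shows "size (tr ! j) \<le> size \<Phi> \<and> size \<Phi> \<le> size (tr ! j) + j * M"
  using assms
proof (induction k arbitrary: \<Phi> tr j)
  case 0 then show ?case by simp
next
  case (Suc k)
  from set_pmf_PUR_Suc[OF Suc.prems(1)] show ?case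
  proof
    assume "tr = [\<Phi>]" then show ?thesis using Suc.prems by simp
  next
    assume "\<exists>i\<in>pos_units \<Phi>. \<exists>tr'. tr = \<Phi> # tr' \<and> tr' \<in> set_pmf (PUR_traj k (assign_true i \<Phi>))"
    then obtain i tr' where tr: "tr = \<Phi> # tr'" and tr': "tr' \<in> set_pmf (PUR_traj k (assign_true i \<Phi>))" by blast
    show ?thesis
    proof (cases j)
      case 0 then show ?thesis using tr by simp
    next
      case (Suc j')
      have cnt: "count_pos i' (assign_true i \<Phi>) \<le> M" for i'
        using count_pos_assign_true[of i' i \<Phi>] Suc.prems(2)[of i'] by linarith
      have "j' < length tr'" using Suc.prems(3) tr Suc by simp
      from Suc.IH[OF tr' cnt this] have
        "size (tr' ! j') \<le> size (assign_true i \<Phi>)"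
        "size (assign_true i \<Phi>) \<le> size (tr' ! j') + j' * M" by auto
      moreover have "size (assign_true i \<Phi>) + count_pos i \<Phi> = size \<Phi>" by (rule size_assign_true)
      moreover note Suc.prems(2)[of i]
      moreover have "size (tr ! j) = size (tr' ! j')" using tr Suc by simp
      moreover have "j * M = M + j' * M" using Suc by simp
      ultimately show ?thesis by linarith
    qed
  qed
qed

definition cl :: "nat \<Rightarrow> nat \<Rightarrow> clause" where
  "cl n k = (if k = n then ({n}, {}) else ({k}, {Suc k}))"

lemma pos_units_restr:
  assumes Ch: "\<And>k. T < k \<Longrightarrow> k \<le> n \<Longrightarrow> cl n k \<in># \<Phi>"
    and Oth: "\<And>c. c \<in># \<Phi> \<Longrightarrow> (\<exists>k. T < k \<and> k \<le> n \<and> c = cl n k) \<or> (\<exists>s\<in>snd c. s \<le> T)"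
    and k: "T < k" "k \<le> n"
  shows "pos_units (restr {Suc k..n} \<Phi>) = {k}" "\<not> ({}, {k}) \<in># restr {Suc k..n} \<Phi>"
proof -
  have mem: "c \<in># restr A \<Phi> \<longleftrightarrow> (\<exists>P S. (P, S) \<in># \<Phi> \<and> P \<inter> A = {} \<and> c = (P, S - A))" for c A
    unfolding restr_def by auto
  show "pos_units (restr {Suc k..n} \<Phi>) = {k}"
  proof (intro set_eqI iffI)
    fix i assume "i \<in> pos_units (restr {Suc k..n} \<Phi>)"
    then obtain P S where PS: "(P, S) \<in># \<Phi>" "P \<inter> {Suc k..n} = {}" "({i}, {}) = (P, S - {Suc k..n})"
      unfolding pos_units_def mem by blast
    from Oth[OF PS(1)] show "i \<in> {k}"
    proof
      assume "\<exists>k'. T < k' \<and> k' \<le> n \<and> (P, S) = cl n k'"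
      then obtain k' where "T < k'" "k' \<le> n" "(P, S) = cl n k'" by blast
      then show ?thesis using PS k by (auto simp: cl_def split: if_splits)
    next
      assume "\<exists>s\<in>snd (P, S). s \<le> T"
      then show ?thesis using PS k by auto
    qed
  next
    fix i assume "i \<in> {k}"
    then have i: "i = k" by simp
    show "i \<in> pos_units (restr {Suc k..n} \<Phi>)"
      unfolding pos_units_def mem i
      using Ch[OF k] k by (intro CollectI exI[of _ "fst (cl n k)"] exI[of _ "snd (cl n k)"]) (auto simp: cl_def)
  qed
  show "\<not> ({}, {k}) \<in># restr {Suc k..n} \<Phi>"
  proof
    assume "({}, {k}) \<in># restr {Suc k..n} \<Phi>"
    then obtain P S where PS: "(P, S) \<in># \<Phi>" "({}, {k}) = (P, S - {Suc k..n})"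
      unfolding mem by blast
    from Oth[OF PS(1)] show False
    proof
      assume "\<exists>k'. T < k' \<and> k' \<le> n \<and> (P, S) = cl n k'"
      then show False using PS by (auto simp: cl_def split: if_splits)
    next
      assume "\<exists>s\<in>snd (P, S). s \<le> T"
      then obtain s where "s \<in> S" "s \<le> T" by auto
      then have "s \<in> S - {Suc k..n}" using k by auto
      moreover have "S - {Suc k..n} = {k}" using PS by simp
      ultimately have "s = k" by blast
      then show False using k \<open>s \<le> T\<close> by simp
    qed
  qed
qed

lemma PUR_reach_chain:
  assumes Ch: "\<And>k. T < k \<Longrightarrow> k \<le> n \<Longrightarrow> cl n k \<in># \<Phi>"
    and Oth: "\<And>c. c \<in># \<Phi> \<Longrightarrow> (\<exists>k. T < k \<and> k \<le> n \<and> c = cl n k) \<or> (\<exists>s\<in>snd c. s \<le> T)"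
  shows "T + d \<le> n \<Longrightarrow> tr \<in> set_pmf (PUR_traj (T + d) (restr {Suc (T + d)..n} \<Phi>)) \<Longrightarrow> d < length tr"
proof (induction d arbitrary: tr)
  case 0
  then show ?case using PUR_hd by fastforce
next
  case (Suc d)
  define k where "k = T + Suc d"
  have k: "T < k" "k \<le> n" using Suc.prems unfolding k_def by auto
  note pu = pos_units_restr[OF Ch Oth k]
  have "PUR_traj (T + Suc d) (restr {Suc k..n} \<Phi>)
      = map_pmf ((#) (restr {Suc k..n} \<Phi>)) (PUR_traj (T + d) (assign_true k (restr {Suc k..n} \<Phi>)))"
    using pu unfolding k_def by (simp add: pmf_of_set_singleton bind_return_pmf)
  moreover have "assign_true k (restr {Suc k..n} \<Phi>) = restr {Suc (T + d)..n} \<Phi>"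
    unfolding assign_true_restr k_def
    by (metis Suc_le_eq add_Suc_right atLeastAtMost_insertL k(2) k_def)
  ultimately have "tr \<in> (#) (restr {Suc k..n} \<Phi>) ` set_pmf (PUR_traj (T + d) (restr {Suc (T + d)..n} \<Phi>))"
    using Suc.prems(2) unfolding k_def by simp
  then obtain tr' where "tr = restr {Suc k..n} \<Phi> # tr'" "tr' \<in> set_pmf (PUR_traj (T + d) (restr {Suc (T + d)..n} \<Phi>))"
    by blast
  with Suc.IH[of tr'] Suc.prems(1) show ?case by simp
qed

definition Pc :: "nat \<Rightarrow> nat set set" where
  "Pc n = insert {} ((\<lambda>i. {i}) ` {1..n})"

lemma card_Pc: "card (Pc n) \<le> n + 1"
proof -
  have "card (Pc n) \<le> Suc (card ((\<lambda>i. {i}) ` {1..n}))" unfolding Pc_def by (rule card_insert_le_m1) simp_all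
  moreover have "card ((\<lambda>i::nat. {i}) ` {1..n}) \<le> n" using card_image_le[of "{1..n}" "\<lambda>i::nat. {i}"] by simp
  ultimately show ?thesis by simp
qed

lemma H_sub: "horn_clauses n \<subseteq> Pc n \<times> Pow {1..n}"
  unfolding horn_clauses_def Pc_def by auto

lemma finite_H: "finite (horn_clauses n)"
  by (rule finite_subset[OF H_sub]) (simp add: Pc_def)

lemma card_H_le: "card (horn_clauses n) \<le> (n + 1) * 2 ^ n"
proof -
  have "card (horn_clauses n) \<le> card (Pc n \<times> Pow {1..n})"
    by (rule card_mono[OF _ H_sub]) (simp add: Pc_def)
  also have "\<dots> = card (Pc n) * 2 ^ n" by (simp add: card_cartesian_product card_Pow)
  also have "\<dots> \<le> (n + 1) * 2 ^ n" using card_Pc[of n] by (intro mult_right_mono) simp_all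
  finally show ?thesis .
qed

lemma card_H_ge: "n * 2 ^ n \<le> card (horn_clauses n)"
proof -
  have sub: "((\<lambda>i. {i}) ` {1..n}) \<times> Pow {1..n} \<subseteq> horn_clauses n"
    unfolding horn_clauses_def by auto
  have "card (((\<lambda>i::nat. {i}) ` {1..n}) \<times> Pow {1..n}) = n * 2 ^ n"
    by (simp add: card_cartesian_product card_Pow card_image inj_on_def)
  moreover have "card (((\<lambda>i::nat. {i}) ` {1..n}) \<times> Pow {1..n}) \<le> card (horn_clauses n)"
    by (rule card_mono[OF finite_H sub])
  ultimately show ?thesis by simp
qed

lemma H_nonempty: "n \<ge> 1 \<Longrightarrow> horn_clauses n \<noteq> {}"
  using card_H_ge[of n] by (metis card.empty le_zero_eq mult_is_0 not_one_le_zero power_not_zero zero_neq_numeral)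

lemma card_H_pos: "card (horn_clauses n \<inter> {c. i \<in> fst c}) \<le> 2 ^ n"
proof -
  have "horn_clauses n \<inter> {c. i \<in> fst c} \<subseteq> {{i}} \<times> Pow {1..n}"
    unfolding horn_clauses_def by auto
  then have "card (horn_clauses n \<inter> {c. i \<in> fst c}) \<le> card ({{i}} \<times> Pow {1..n})"
    by (intro card_mono) auto
  then show ?thesis by (simp add: card_cartesian_product card_Pow)
qed

lemma card_H_notG: "card (horn_clauses n \<inter> - {c. \<exists>s\<in>snd c. s \<le> T}) \<le> (n + 1) * 2 ^ (n - T)"
proof -
  have "horn_clauses n \<inter> - {c. \<exists>s\<in>snd c. s \<le> T} \<subseteq> Pc n \<times> Pow {Suc T..n}"
    using H_sub[of n] by fastforce
  then have "card (horn_clauses n \<inter> - {c. \<exists>s\<in>snd c. s \<le> T}) \<le> card (Pc n \<times> Pow {Suc T..n})"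
    by (intro card_mono) (auto simp: Pc_def)
  also have "\<dots> = card (Pc n) * 2 ^ (n - T)" by (simp add: card_cartesian_product card_Pow)
  also have "\<dots> \<le> (n + 1) * 2 ^ (n - T)" using card_Pc[of n] by (intro mult_right_mono) simp_all
  finally show ?thesis .
qed

lemma cl_in_H: "T < k \<Longrightarrow> k \<le> n \<Longrightarrow> cl n k \<in> horn_clauses n"
  unfolding cl_def horn_clauses_def by auto

lemma set_pmf_rep_H:
  assumes "n \<ge> 1"
  shows "set_pmf (replicate_pmf N (pmf_of_set (horn_clauses n))) = {xs. set xs \<subseteq> horn_clauses n \<and> length xs = N}"
  using assms by (auto simp: set_replicate_pmf finite_H H_nonempty)

lemma count_pos_mset: "count_pos i (mset xs) = length (filter (\<lambda>c. i \<in> fst c) xs)"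
  unfolding count_pos_def by (simp flip: mset_filter)

lemma bad_bound:
  assumes "n \<ge> 1"
  shows "measure_pmf.prob (Omega n N) {\<Phi>. \<exists>i. M < count_pos i \<Phi>} \<le> n * (1 + 1 / n) ^ N / 2 ^ Suc M"
proof -
  define H where "H = horn_clauses n"
  define R where "R = replicate_pmf N (pmf_of_set H)"
  have fin: "finite H" "H \<noteq> {}" using assms by (auto simp: H_def finite_H H_nonempty)
  have "measure_pmf.prob (Omega n N) {\<Phi>. \<exists>i. M < count_pos i \<Phi>}
      = measure_pmf.prob R (mset -` {\<Phi>. \<exists>i. M < count_pos i \<Phi>} \<inter> set_pmf R)"
    by (simp add: Omega_def R_def H_def measure_Int_set_pmf)
  also have "\<dots> \<le> measure_pmf.prob R (\<Union>i\<in>{1..n}. {xs. Suc M \<le> length (filter (\<lambda>c. i \<in> fst c) xs)})"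
  proof (rule measure_pmf.finite_measure_mono)
    show "mset -` {\<Phi>. \<exists>i. M < count_pos i \<Phi>} \<inter> set_pmf R
        \<subseteq> (\<Union>i\<in>{1..n}. {xs. Suc M \<le> length (filter (\<lambda>c. i \<in> fst c) xs)})"
    proof
      fix xs assume xs: "xs \<in> mset -` {\<Phi>. \<exists>i. M < count_pos i \<Phi>} \<inter> set_pmf R"
      then obtain i where i: "M < length (filter (\<lambda>c. i \<in> fst c) xs)" by (auto simp: count_pos_mset)
      have sub: "set xs \<subseteq> H" using xs assms by (simp add: R_def H_def set_pmf_rep_H)
      from i have "filter (\<lambda>c. i \<in> fst c) xs \<noteq> []" by auto
      then obtain c where "c \<in> set xs" "i \<in> fst c" by (auto simp: filter_empty_conv)
      then have "i \<in> {1..n}" using sub unfolding H_def horn_clauses_def by auto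
      moreover have "xs \<in> {xs. Suc M \<le> length (filter (\<lambda>c. i \<in> fst c) xs)}" using i by simp
      ultimately show "xs \<in> (\<Union>i\<in>{1..n}. {xs. Suc M \<le> length (filter (\<lambda>c. i \<in> fst c) xs)})"
        by (rule UN_I)
    qed
  qed simp
  also have "\<dots> \<le> (\<Sum>i\<in>{1..n}. measure_pmf.prob R {xs. Suc M \<le> length (filter (\<lambda>c. i \<in> fst c) xs)})"
    by (rule measure_pmf.finite_measure_subadditive_finite) auto
  also have "\<dots> \<le> (\<Sum>i\<in>{1..n}. (1 + 1 / n) ^ N / 2 ^ Suc M)"
  proof (rule sum_mono)
    fix i
    have "measure_pmf.prob R {xs. Suc M \<le> length (filter (\<lambda>c. i \<in> fst c) xs)}
        \<le> (1 + card (H \<inter> {x. i \<in> fst x}) / card H) ^ N / 2 ^ Suc M"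
      unfolding R_def by (rule chernoff_rep[OF fin])
    also have "\<dots> \<le> (1 + 1 / n) ^ N / 2 ^ Suc M"
    proof -
      have "real (card (H \<inter> {x. i \<in> fst x})) \<le> 2 ^ n"
        using card_H_pos[of n i] unfolding H_def by (metis of_nat_le_iff of_nat_numeral of_nat_power)
      moreover have "real n * 2 ^ n \<le> card H"
        using card_H_ge[of n] unfolding H_def by (metis of_nat_le_iff of_nat_mult of_nat_numeral of_nat_power)
      ultimately have "card (H \<inter> {x. i \<in> fst x}) / card H \<le> 1 / n"
      proof -
        have "card (H \<inter> {x. i \<in> fst x}) / card H \<le> 2 ^ n / (real n * 2 ^ n)"
          using assms \<open>real (card (H \<inter> {x. i \<in> fst x})) \<le> 2 ^ n\<close> \<open>real n * 2 ^ n \<le> card H\<close>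
          by (intro frac_le) auto
        also have "\<dots> = 1 / n" by simp
        finally show ?thesis .
      qed
      then show ?thesis
        by (intro divide_right_mono power_mono) auto
    qed
    finally show "measure_pmf.prob R {xs. Suc M \<le> length (filter (\<lambda>c. i \<in> fst c) xs)} \<le> (1 + 1 / n) ^ N / 2 ^ Suc M" .
  qed
  also have "\<dots> = n * (1 + 1 / n) ^ N / 2 ^ Suc M" by simp
  finally show ?thesis .
qed

definition goodF :: "nat \<Rightarrow> nat \<Rightarrow> formula \<Rightarrow> bool" where
  "goodF n T \<Phi> \<longleftrightarrow> (\<forall>k. T < k \<longrightarrow> k \<le> n \<longrightarrow> cl n k \<in># \<Phi>) \<and>
     (\<forall>c. c \<in># \<Phi> \<longrightarrow> (\<exists>k. T < k \<and> k \<le> n \<and> c = cl n k) \<or> (\<exists>s\<in>snd c. s \<le> T))"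

lemma good_bound:
  assumes n: "n \<ge> 1" and T: "T \<le> n" and mN: "n - T \<le> N"
    and q: "0 \<le> q" and q_def: "q = 1 - (real n + 1) * 2 ^ (n - T) / (real n * 2 ^ n)"
  shows "(1 / ((real n + 1) * 2 ^ n)) ^ (n - T) * q ^ N \<le> measure_pmf.prob (Omega n N) {\<Phi>. goodF n T \<Phi>}"
proof -
  define H where "H = horn_clauses n"
  define R where "R = replicate_pmf N (pmf_of_set H)"
  define m where "m = n - T"
  define G where "G = {c::clause. \<exists>s\<in>snd c. s \<le> T}"
  define A where "A k = (if k < m then {cl n (Suc T + k)} else G)" for k
  define h where "h k = (if k < m then 1 / ((real n + 1) * 2 ^ n) else q)" for k
  have fin: "finite H" "H \<noteq> {}" using n by (auto simp: H_def finite_H H_nonempty)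
  have cH1: "real n * 2 ^ n \<le> card H"
    using card_H_ge[of n] unfolding H_def by (metis of_nat_le_iff of_nat_mult of_nat_numeral of_nat_power)
  have cH2: "card H \<le> (real n + 1) * 2 ^ n"
  proof -
    have "real (card H) \<le> real ((n + 1) * 2 ^ n)" using card_H_le[of n] unfolding H_def by (simp only: of_nat_le_iff)
    then show ?thesis by (simp add: algebra_simps)
  qed
  have cHpos: "0 < real (card H)" using fin by (simp add: card_gt_0_iff)
  have q1: "q \<le> 1" unfolding q_def by simp
  have hf: "h k \<le> card (H \<inter> A k) / card H" for k
  proof (cases "k < m")
    case True
    then have "cl n (Suc T + k) \<in> H" unfolding H_def m_def by (intro cl_in_H) auto
    then have "card (H \<inter> A k) = 1" using True unfolding A_def by simp
    then show ?thesis using True cH2 cHpos unfolding h_def by (simp add: frac_le algebra_simps)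
  next
    case False
    have c: "card (H \<inter> G) + card (H \<inter> - G) = card H"
      using fin(1) by (metis card_Int_Diff Diff_eq Int_commute finite_Int)
    have c2: "real (card (H \<inter> - G)) \<le> (real n + 1) * 2 ^ m"
    proof -
      have "real (card (H \<inter> - G)) \<le> real ((n + 1) * 2 ^ m)"
        using card_H_notG[of n T] unfolding H_def G_def m_def by (simp only: of_nat_le_iff)
      then show ?thesis by (simp add: algebra_simps)
    qed
    have "q \<le> 1 - (real n + 1) * 2 ^ m / card H"
      unfolding q_def m_def using cH1 n by (intro diff_left_mono frac_le) (auto simp: m_def algebra_simps)
    also have "\<dots> \<le> 1 - card (H \<inter> - G) / card H"
      using c2 cHpos by (intro diff_left_mono divide_right_mono) auto
    also have "\<dots> = card (H \<inter> G) / card H"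
      using c cHpos by (simp add: field_simps flip: of_nat_add)
    finally show ?thesis using False unfolding h_def A_def by simp
  qed
  have h0: "0 \<le> h k" for k unfolding h_def using q by simp
  have "(1 / ((real n + 1) * 2 ^ n)) ^ (n - T) * q ^ N \<le> (1 / ((real n + 1) * 2 ^ n)) ^ m * q ^ (N - m)"
    unfolding m_def using q q1 by (intro mult_left_mono power_decreasing) auto
  also have "\<dots> = (\<Prod>k<N. h k)"
  proof -
    have "(\<Prod>k<N. h k) = (\<Prod>k\<in>{..<N} \<inter> {k. k < m}. 1 / ((real n + 1) * 2 ^ n)) * (\<Prod>k\<in>{..<N} \<inter> - {k. k < m}. q)"
      unfolding h_def by (rule prod.If_cases) simp
    moreover have "{..<N} \<inter> {k. k < m} = {..<m}" using mN unfolding m_def by auto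
    moreover have "card ({..<N} \<inter> - {k. k < m}) = N - m"
    proof -
      have "{..<N} \<inter> - {k. k < m} = {m..<N}" by auto
      then show ?thesis by simp
    qed
    ultimately show ?thesis by simp
  qed
  also have "\<dots> \<le> (\<Prod>k<N. card (H \<inter> A k) / card H)"
    by (intro prod_mono) (use hf h0 in auto)
  also have "\<dots> = measure_pmf.prob R {xs. \<forall>k<N. xs!k \<in> A k}"
    unfolding R_def by (rule prob_replicate_prod[OF fin, symmetric])
  also have "\<dots> = measure_pmf.prob R ({xs. \<forall>k<N. xs!k \<in> A k} \<inter> set_pmf R)"
    by (simp add: measure_Int_set_pmf)
  also have "\<dots> \<le> measure_pmf.prob R (mset -` {\<Phi>. goodF n T \<Phi>})"
  proof (rule measure_pmf.finite_measure_mono)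
    show "{xs. \<forall>k<N. xs!k \<in> A k} \<inter> set_pmf R \<subseteq> mset -` {\<Phi>. goodF n T \<Phi>}"
    proof
      fix xs assume xs: "xs \<in> {xs. \<forall>k<N. xs!k \<in> A k} \<inter> set_pmf R"
      then have len: "length xs = N" and Ak: "\<And>k. k < N \<Longrightarrow> xs ! k \<in> A k"
        using n by (auto simp: R_def H_def set_pmf_rep_H)
      have Ch: "cl n k \<in># mset xs" if "T < k" "k \<le> n" for k
      proof -
        have j: "k - Suc T < m" "k - Suc T < N" using that mN unfolding m_def by auto
        then have "xs ! (k - Suc T) = cl n k" using Ak[of "k - Suc T"] that unfolding A_def by auto
        then show ?thesis using j len by (metis in_multiset_in_set nth_mem)
      qed
      have Oth: "(\<exists>k. T < k \<and> k \<le> n \<and> c = cl n k) \<or> (\<exists>s\<in>snd c. s \<le> T)" if "c \<in># mset xs" for c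
      proof -
        from that obtain j where j: "j < N" "c = xs ! j" using len by (auto simp: in_set_conv_nth)
        show ?thesis
        proof (cases "j < m")
          case True
          then have "c = cl n (Suc T + j)" using Ak[OF j(1)] j unfolding A_def by auto
          then show ?thesis using True unfolding m_def by (intro disjI1 exI[of _ "Suc T + j"]) auto
        next
          case False
          then show ?thesis using Ak[OF j(1)] j unfolding A_def G_def by auto
        qed
      qed
      show "xs \<in> mset -` {\<Phi>. goodF n T \<Phi>}" using Ch Oth unfolding goodF_def by blast
    qed
  qed simp
  also have "\<dots> = measure_pmf.prob (Omega n N) {\<Phi>. goodF n T \<Phi>}"
    by (simp add: Omega_def R_def H_def)
  finally show ?thesis .
qed

lemma E_good:
  assumes tr: "tr \<in> set_pmf (PUR_traj n \<Phi>)" and cnt: "\<And>i. count_pos i \<Phi> \<le> M"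
    and M: "real M \<le> 1 + 2 * (real (size \<Phi>) - 1) / real T"
    and r: "reaches n T tr"
  shows "event_E n T tr"
proof -
  have T: "T \<le> n" "n - T < length tr" using r unfolding reaches_def by auto
  have t0: "tr ! 0 = \<Phi>" using PUR_hd[OF tr] by simp
  have "Nstage n tr n - real (n - T) * (1 + 2 * (Nstage n tr n - 1) / real T) \<le> Nstage n tr j
        \<and> Nstage n tr j \<le> Nstage n tr n" if j: "j \<in> {T..n}" for j
  proof -
    have jl: "n - j < length tr" using j T by auto
    from PUR_size[OF tr cnt jl] have
      a: "size (tr ! (n - j)) \<le> size \<Phi>" and b: "size \<Phi> \<le> size (tr ! (n - j)) + (n - j) * M" by auto
    have Nn: "Nstage n tr n = real (size \<Phi>)" unfolding Nstage_def using t0 by simp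
    have Nj: "Nstage n tr j = real (size (tr ! (n - j)))" unfolding Nstage_def by simp
    have "real ((n - j) * M) \<le> real (n - T) * real M"
      using j by (simp add: mult_right_mono)
    also have "\<dots> \<le> real (n - T) * (1 + 2 * (real (size \<Phi>) - 1) / real T)"
      using M by (intro mult_left_mono) auto
    finally have "real ((n - j) * M) \<le> real (n - T) * (1 + 2 * (real (size \<Phi>) - 1) / real T)" .
    moreover have "real (size \<Phi>) \<le> real (size (tr ! (n - j))) + real ((n - j) * M)"
      using b by (metis of_nat_add of_nat_le_iff)
    moreover have "real (size (tr ! (n - j))) \<le> real (size \<Phi>)" using a by simp
    ultimately show ?thesis unfolding Nn Nj by linarith
  qed
  then show ?thesis unfolding event_E_def using r by blast
qed

lemma hd_run: "map_pmf (\<lambda>tr. tr ! 0) (PUR_run c n) = Omega n (nat \<lfloor>c * 2 ^ n\<rfloor>)"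
proof -
  have "map_pmf (\<lambda>tr. tr ! 0) (PUR_traj n \<Phi>) = return_pmf \<Phi>" for \<Phi>
    using PUR_hd[of _ n \<Phi>] by (simp add: map_pmf_eq_return_pmf_iff)
  then show ?thesis unfolding PUR_run_def by (simp add: map_bind_pmf bind_return_pmf')
qed

lemma prob_run_hd:
  "measure_pmf.prob (PUR_run c n) {tr. P (tr ! 0)} = measure_pmf.prob (Omega n (nat \<lfloor>c * 2 ^ n\<rfloor>)) {\<Phi>. P \<Phi>}"
proof -
  have "measure_pmf.prob (PUR_run c n) {tr. P (tr ! 0)} = measure_pmf.prob (map_pmf (\<lambda>tr. tr ! 0) (PUR_run c n)) {\<Phi>. P \<Phi>}"
    by simp
  then show ?thesis by (simp only: hd_run)
qed

lemma supp_run: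
  assumes "n \<ge> 1" "tr \<in> set_pmf (PUR_run c n)"
  shows "\<exists>xs. length xs = nat \<lfloor>c * 2 ^ n\<rfloor> \<and> tr \<in> set_pmf (PUR_traj n (mset xs))"
  using assms unfolding PUR_run_def Omega_def by (auto simp: set_pmf_rep_H)

lemma fixed_bounds:
  fixes c :: real and n :: nat
  defines "N \<equiv> nat \<lfloor>c * 2 ^ n\<rfloor>"
  assumes n: "n \<ge> 1" and T: "1 \<le> T" "T \<le> n" and mN: "n - T \<le> N"
    and q: "0 \<le> 1 - (real n + 1) * 2 ^ (n - T) / (real n * 2 ^ n)"
    and M: "real M \<le> 1 + 2 * (real N - 1) / real T"
  shows "(1 / ((real n + 1) * 2 ^ n)) ^ (n - T) * (1 - (real n + 1) * 2 ^ (n - T) / (real n * 2 ^ n)) ^ N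
           \<le> measure_pmf.prob (PUR_run c n) {tr. reaches n T tr}"
    and "measure_pmf.prob (PUR_run c n) {tr. reaches n T tr} - n * (1 + 1 / n) ^ N / 2 ^ Suc M
           \<le> measure_pmf.prob (PUR_run c n) {tr. event_E n T tr}"
    and "measure_pmf.prob (PUR_run c n) {tr. event_E n T tr} \<le> measure_pmf.prob (PUR_run c n) {tr. reaches n T tr}"
proof -
  let ?R = "PUR_run c n"
  show "(1 / ((real n + 1) * 2 ^ n)) ^ (n - T) * (1 - (real n + 1) * 2 ^ (n - T) / (real n * 2 ^ n)) ^ N
           \<le> measure_pmf.prob ?R {tr. reaches n T tr}"
  proof -
    have "(1 / ((real n + 1) * 2 ^ n)) ^ (n - T) * (1 - (real n + 1) * 2 ^ (n - T) / (real n * 2 ^ n)) ^ N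
       \<le> measure_pmf.prob (Omega n N) {\<Phi>. goodF n T \<Phi>}"
      by (rule good_bound[OF n T(2) mN q refl])
    also have "\<dots> = measure_pmf.prob ?R ({tr. goodF n T (tr ! 0)} \<inter> set_pmf ?R)"
      unfolding N_def by (simp add: measure_Int_set_pmf prob_run_hd)
    also have "\<dots> \<le> measure_pmf.prob ?R {tr. reaches n T tr}"
    proof (rule measure_pmf.finite_measure_mono)
      show "{tr. goodF n T (tr ! 0)} \<inter> set_pmf ?R \<subseteq> {tr. reaches n T tr}"
      proof
        fix tr assume tr: "tr \<in> {tr. goodF n T (tr ! 0)} \<inter> set_pmf ?R"
        then obtain xs where xs: "tr \<in> set_pmf (PUR_traj n (mset xs))" using supp_run[OF n] by blast
        have g: "goodF n T (mset xs)" using tr PUR_hd[OF xs] by simp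
        have "n - T < length tr"
          using PUR_reach_chain[of T n "mset xs" "n - T" tr] g xs T restr_empty[of "mset xs"]
          unfolding goodF_def by auto
        then show "tr \<in> {tr. reaches n T tr}" using T unfolding reaches_def by simp
      qed
    qed simp
    finally show ?thesis .
  qed
  show "measure_pmf.prob ?R {tr. reaches n T tr} - n * (1 + 1 / n) ^ N / 2 ^ Suc M
           \<le> measure_pmf.prob ?R {tr. event_E n T tr}"
  proof -
    have "measure_pmf.prob ?R {tr. reaches n T tr} = measure_pmf.prob ?R ({tr. reaches n T tr} \<inter> set_pmf ?R)"
      by (simp add: measure_Int_set_pmf)
    also have "\<dots> \<le> measure_pmf.prob ?R ({tr. event_E n T tr} \<union> {tr. \<exists>i. M < count_pos i (tr ! 0)})"
    proof (rule measure_pmf.finite_measure_mono)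
      show "{tr. reaches n T tr} \<inter> set_pmf ?R \<subseteq> {tr. event_E n T tr} \<union> {tr. \<exists>i. M < count_pos i (tr ! 0)}"
      proof
        fix tr assume tr: "tr \<in> {tr. reaches n T tr} \<inter> set_pmf ?R"
        then obtain xs where xs: "tr \<in> set_pmf (PUR_traj n (mset xs))" "length xs = N"
          using supp_run[OF n] unfolding N_def by blast
        show "tr \<in> {tr. event_E n T tr} \<union> {tr. \<exists>i. M < count_pos i (tr ! 0)}"
        proof (cases "\<exists>i. M < count_pos i (tr ! 0)")
          case True then show ?thesis by simp
        next
          case False
          then have "\<And>i. count_pos i (mset xs) \<le> M" using PUR_hd[OF xs(1)] by (simp add: not_less)
          moreover have "real M \<le> 1 + 2 * (real (size (mset xs)) - 1) / real T" using M xs(2) by simp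
          ultimately have "event_E n T tr" using E_good[OF xs(1)] tr by blast
          then show ?thesis by simp
        qed
      qed
    qed simp
    also have "\<dots> \<le> measure_pmf.prob ?R {tr. event_E n T tr} + measure_pmf.prob ?R {tr. \<exists>i. M < count_pos i (tr ! 0)}"
      by (rule measure_Un_le) simp_all
    also have "measure_pmf.prob ?R {tr. \<exists>i. M < count_pos i (tr ! 0)} = measure_pmf.prob (Omega n N) {\<Phi>. \<exists>i. M < count_pos i \<Phi>}"
      unfolding N_def by (rule prob_run_hd)
    also have "\<dots> \<le> n * (1 + 1 / n) ^ N / 2 ^ Suc M" by (rule bad_bound[OF n])
    finally show ?thesis by simp
  qed
  show "measure_pmf.prob ?R {tr. event_E n T tr} \<le> measure_pmf.prob ?R {tr. reaches n T tr}"
    by (rule measure_pmf.finite_measure_mono) (auto simp: event_E_def)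
qed

definition gfun :: "real \<Rightarrow> nat \<Rightarrow> real" where
  "gfun c n = real n * exp (- (c * 2 ^ n - 1) / (3 * real n)
      + c * sqrt (real n) * ln ((real n + 1) * 2 ^ n) + 4 * c * 2 powr (c * sqrt (real n)))"

lemma per_n:
  fixes c :: real and n T :: nat
  assumes c: "c > 0" and n2: "n \<ge> 2" and Tl: "real n - c * sqrt (real n) \<le> real T" and Tu: "T \<le> n"
    and big1: "c * sqrt (real n) + 2 \<le> real n" and big2: "c * sqrt (real n) + 2 \<le> c * 2 ^ n - 1"
  shows "1 - gfun c n \<le> measure_pmf.prob (PUR_run c n) {tr. event_E n T tr} / measure_pmf.prob (PUR_run c n) {tr. reaches n T tr}
       \<and> measure_pmf.prob (PUR_run c n) {tr. event_E n T tr} / measure_pmf.prob (PUR_run c n) {tr. reaches n T tr} \<le> 1"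
proof -
  define N where "N = nat \<lfloor>c * 2 ^ n\<rfloor>"
  define m where "m = n - T"
  define M where "M = nat \<lfloor>2 * real N / real n\<rfloor>"
  define x where "x = (real n + 1) * 2 ^ m / (real n * 2 ^ n)"
  define B where "B = (real n + 1) * 2 ^ n"
  define R where "R = measure_pmf.prob (PUR_run c n) {tr. reaches n T tr}"
  define PE where "PE = measure_pmf.prob (PUR_run c n) {tr. event_E n T tr}"
  define L where "L = (1 / B) ^ m * (1 - x) ^ N"
  define U where "U = n * (1 + 1 / n) ^ N / 2 ^ Suc M"
  have n1: "n \<ge> 1" using n2 by simp
  have mreal: "real m \<le> c * sqrt (real n)" unfolding m_def using Tl Tu by (simp add: of_nat_diff)
  have cpos2: "0 < c * 2 ^ n" using c by simp
  have Nl: "c * 2 ^ n - 1 \<le> real N" unfolding N_def using cpos2 by linarith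
  have Nu: "real N \<le> c * 2 ^ n" unfolding N_def using cpos2 by linarith
  have N1: "1 \<le> real N" using Nl big2 c by (smt (verit) mult_nonneg_nonneg real_sqrt_ge_zero of_nat_0_le_iff)
  have mN: "m \<le> N" using mreal Nl big2 by linarith
  have m2: "m + 2 \<le> n" using mreal big1 by linarith
  have T1: "1 \<le> T" using m2 unfolding m_def by linarith
  have x0: "0 \<le> x" unfolding x_def by simp
  have xhalf: "x \<le> 1 / 2"
  proof -
    have "x \<le> 2 * 2 ^ m / 2 ^ n"
      unfolding x_def using n1 by (simp add: field_simps)
    also have "\<dots> = 2 ^ (m + 1) / 2 ^ n" by simp
    also have "\<dots> \<le> 1 / 2"
    proof -
      have "(2::real) ^ (m + 2) \<le> 2 ^ n" using m2 by (intro power_increasing) auto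
      then show ?thesis by (simp add: field_simps)
    qed
    finally show ?thesis .
  qed
  have Mle: "real M \<le> 1 + 2 * (real N - 1) / real T"
  proof -
    have "real M \<le> 2 * real N / real n" unfolding M_def using n1 by simp
    also have "\<dots> = 2 / real n + 2 * (real N - 1) / real n" using n1 by (simp add: field_simps)
    also have "\<dots> \<le> 1 + 2 * (real N - 1) / real T"
    proof (intro add_mono)
      show "2 / real n \<le> 1" using n2 by simp
      show "2 * (real N - 1) / real n \<le> 2 * (real N - 1) / real T"
        using N1 T1 Tu by (intro divide_left_mono) auto
    qed
    finally show ?thesis .
  qed
  have Mge: "2 * real N / real n \<le> real (Suc M)" unfolding M_def by linarith
  have q: "0 \<le> 1 - (real n + 1) * 2 ^ (n - T) / (real n * 2 ^ n)" using xhalf unfolding x_def m_def by linarith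
  have b1: "L \<le> R" and b2: "R - U \<le> PE" and b3: "PE \<le> R"
    using fixed_bounds[OF n1 T1 Tu _ q, of c M] mN Mle
    unfolding L_def R_def PE_def U_def B_def x_def m_def N_def by (auto simp: power_one_over)
  have Bge1: "1 \<le> B" unfolding B_def using mult_mono[of 1 "real n + 1" 1 "2 ^ n"] by (simp add: one_le_power)
  have Lpos: "0 < L" unfolding L_def using Bge1 xhalf by simp
  have U0: "0 \<le> U" unfolding U_def by simp
  have Rpos: "0 < R" using Lpos b1 by simp
  have upper: "PE / R \<le> 1" using b3 Rpos by simp
  have "1 - U / L \<le> 1 - U / R"
    using Lpos b1 U0 by (simp add: frac_le)
  also have "\<dots> = (R - U) / R" using Rpos by (simp add: field_simps)
  also have "\<dots> \<le> PE / R" using b2 Rpos by (simp add: divide_right_mono)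
  finally have lower: "1 - U / L \<le> PE / R" .
  have UL: "U / L \<le> gfun c n"
  proof -
    have U1: "(1 + 1 / real n) ^ N \<le> exp (real N / real n)"
    proof -
      have "(1 + 1 / real n) ^ N \<le> exp (1 / real n) ^ N"
        by (intro power_mono) (auto simp: add.commute)
      also have "\<dots> = exp (real N / real n)" by (simp add: exp_of_nat_mult[symmetric])
      finally show ?thesis .
    qed
    have U2: "exp (4 / 3 * (real N / real n)) \<le> 2 ^ Suc M"
    proof -
      have "exp (4 / 3 * (real N / real n)) \<le> exp (ln 2 * (2 * real N / real n))"
        using ln2_ge_two_thirds n1 by (intro exp_le_cancel_iff[THEN iffD2]) (simp add: field_simps mult_left_mono)
      also have "\<dots> \<le> exp (ln 2 * real (Suc M))"
        using Mge by (intro exp_le_cancel_iff[THEN iffD2] mult_left_mono) auto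
      also have "\<dots> = 2 ^ Suc M" by (subst mult.commute, subst exp_of_nat_mult) simp
      finally show ?thesis .
    qed
    have Ule: "U \<le> real n * exp (- (c * 2 ^ n - 1) / (3 * real n))"
    proof -
      have "U \<le> real n * exp (real N / real n) / exp (4 / 3 * (real N / real n))"
        unfolding U_def using U1 U2 by (intro frac_le mult_left_mono) auto
      also have "\<dots> = real n * exp (- (real N / (3 * real n)))"
      proof -
        have e: "real N / real n - 4 / 3 * (real N / real n) = - (real N / (3 * real n))" by (simp add: field_simps)
        show ?thesis by (simp only: times_divide_eq_right[symmetric] exp_diff[symmetric] e)
      qed
      also have "\<dots> \<le> real n * exp (- (c * 2 ^ n - 1) / (3 * real n))"
      proof -
        have "(c * 2 ^ n - 1) / (3 * real n) \<le> real N / (3 * real n)"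
          using Nl n1 by (intro divide_right_mono) auto
        then have "- (real N / (3 * real n)) \<le> - ((c * 2 ^ n - 1) / (3 * real n))" by linarith
        also have "- ((c * 2 ^ n - 1) / (3 * real n)) = - (c * 2 ^ n - 1) / (3 * real n)" by (rule minus_divide_left)
        finally show ?thesis by (intro mult_left_mono exp_le_cancel_iff[THEN iffD2]) auto
      qed
      finally show ?thesis .
    qed
    have L1: "exp (- (c * sqrt (real n) * ln B)) \<le> (1 / B) ^ m"
    proof -
      have "(1 / B) ^ m = exp (- (real m * ln B))"
        using Bge1 by (simp add: exp_minus exp_of_nat_mult inverse_eq_divide power_one_over)
      moreover have "real m * ln B \<le> c * sqrt (real n) * ln B"
        using mreal Bge1 by (intro mult_right_mono) auto
      ultimately show ?thesis by simp
    qed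
    have L2: "exp (- (4 * c * 2 powr (c * sqrt (real n)))) \<le> (1 - x) ^ N"
    proof -
      have "- x - 2 * x\<^sup>2 \<le> ln (1 - x)" using x0 xhalf by (rule ln_one_minus_pos_lower_bound)
      moreover have "2 * x\<^sup>2 \<le> x"
      proof -
        have a: "x * (2 * x) \<le> x * 1" using x0 xhalf by (intro mult_left_mono) auto
        have b: "2 * x\<^sup>2 = x * (2 * x)" by (simp add: power2_eq_square algebra_simps)
        show ?thesis using a b by linarith
      qed
      ultimately have lx: "- 2 * x \<le> ln (1 - x)" by linarith
      have xN: "x * real N \<le> 2 * c * 2 powr (c * sqrt (real n))"
      proof -
        have "x \<le> 2 * 2 ^ m / 2 ^ n" unfolding x_def using n1 by (simp add: field_simps)
        then have "x * real N \<le> 2 * 2 ^ m / 2 ^ n * (c * 2 ^ n)" using Nu x0 by (intro mult_mono) auto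
        also have "\<dots> = 2 * c * 2 ^ m" by simp
        also have "\<dots> \<le> 2 * c * 2 powr (c * sqrt (real n))"
          using c mreal by (simp add: powr_realpow[symmetric])
        finally show ?thesis .
      qed
      have "exp (- (4 * c * 2 powr (c * sqrt (real n)))) \<le> exp (real N * ln (1 - x))"
      proof -
        have a: "real N * (- 2 * x) \<le> real N * ln (1 - x)" by (intro mult_left_mono) (use lx in auto)
        have b: "real N * (- 2 * x) = - 2 * (x * real N)" by (simp add: algebra_simps)
        have "- (4 * c * 2 powr (c * sqrt (real n))) \<le> real N * ln (1 - x)" using a b xN by linarith
        then show ?thesis by simp
      qed
      also have "\<dots> = (1 - x) ^ N" using xhalf by (simp add: exp_of_nat_mult)
      finally show ?thesis .
    qed
    have Lge: "exp (- (c * sqrt (real n) * ln B) - 4 * c * 2 powr (c * sqrt (real n))) \<le> L"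
    proof -
      have "exp (- (c * sqrt (real n) * ln B) - 4 * c * 2 powr (c * sqrt (real n)))
          = exp (- (c * sqrt (real n) * ln B)) * exp (- (4 * c * 2 powr (c * sqrt (real n))))"
        by (simp only: diff_conv_add_uminus exp_add)
      also have "\<dots> \<le> (1 / B) ^ m * (1 - x) ^ N"
        using L1 L2 Bge1 by (intro mult_mono) auto
      finally show ?thesis unfolding L_def .
    qed
    have "U / L \<le> real n * exp (- (c * 2 ^ n - 1) / (3 * real n)) / exp (- (c * sqrt (real n) * ln B) - 4 * c * 2 powr (c * sqrt (real n)))"
      using Ule Lge Lpos U0 by (intro frac_le) auto
    also have "\<dots> = real n * exp (- (c * 2 ^ n - 1) / (3 * real n) - (- (c * sqrt (real n) * ln B) - 4 * c * 2 powr (c * sqrt (real n))))"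
      by (simp only: times_divide_eq_right[symmetric] exp_diff[symmetric])
    also have "- (c * 2 ^ n - 1) / (3 * real n) - (- (c * sqrt (real n) * ln B) - 4 * c * 2 powr (c * sqrt (real n)))
        = - (c * 2 ^ n - 1) / (3 * real n) + c * sqrt (real n) * ln ((real n + 1) * 2 ^ n) + 4 * c * 2 powr (c * sqrt (real n))"
      unfolding B_def by simp
    also have "real n * exp (- (c * 2 ^ n - 1) / (3 * real n) + c * sqrt (real n) * ln ((real n + 1) * 2 ^ n) + 4 * c * 2 powr (c * sqrt (real n))) = gfun c n"
      unfolding gfun_def ..
    finally show ?thesis .
  qed
  show ?thesis using lower upper UL unfolding R_def PE_def by linarith
qed

lemma gfun_lim: "c > 0 \<Longrightarrow> gfun c \<longlonglongrightarrow> 0"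
  unfolding gfun_def by real_asymp

theorem mainTheorem4:
  fixes c :: real and t :: "nat \<Rightarrow> nat"
  assumes "c > 0"
    and "\<And>n. real n - c * sqrt (real n) \<le> real (t n) \<and> t n \<le> n"
  shows "(\<lambda>n. measure_pmf.prob (PUR_run c n) {tr. event_E n (t n) tr}
              / measure_pmf.prob (PUR_run c n) {tr. reaches n (t n) tr})
         \<longlonglongrightarrow> 1"
proof -
  have e1: "eventually (\<lambda>n::nat. 2 \<le> n) sequentially" by (rule eventually_ge_at_top)
  have e2: "eventually (\<lambda>n::nat. c * sqrt (real n) + 2 \<le> real n) sequentially"
    using assms(1) by real_asymp
  have e3: "eventually (\<lambda>n::nat. c * sqrt (real n) + 2 \<le> c * 2 ^ n - 1) sequentially"
    using assms(1) by real_asymp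
  have ev: "eventually (\<lambda>n. 1 - gfun c n \<le> measure_pmf.prob (PUR_run c n) {tr. event_E n (t n) tr}
              / measure_pmf.prob (PUR_run c n) {tr. reaches n (t n) tr} \<and>
              measure_pmf.prob (PUR_run c n) {tr. event_E n (t n) tr}
              / measure_pmf.prob (PUR_run c n) {tr. reaches n (t n) tr} \<le> 1) sequentially"
    using e1 e2 e3
  proof eventually_elim
    case (elim n)
    then show ?case using per_n[OF assms(1) elim(1) _ _ elim(2) elim(3)] assms(2)[of n] by blast
  qed
  have l1: "(\<lambda>n. 1 - gfun c n) \<longlonglongrightarrow> 1"
    using tendsto_diff[OF tendsto_const gfun_lim[OF assms(1)], of 1] by simp
  show ?thesis
    by (rule tendsto_sandwich[OF _ _ l1 tendsto_const]) (use ev in \<open>auto elim: eventually_mono\<close>)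
qed

end
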